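(* For every positive integer $n$, \[ \sum_{w \in B_n} t^{\mathrm{fdes}(w)}q^{\mathrm{fmaj}(w)} = \Big(\sum_{u\in S_n} t^{\mathrm{des}(u)}q^{\mathrm{maj}(u)}\Big)\cdot\prod_{i=1}^n (1+tq^i).\]
   Context: $S_n$ is the set of permutations of $[n]=\{1,\dots,n\}$, written as words $u=u_1\cdots u_n$. $B_n$ is the set of signed permutations: words $w=w_1\cdots w_n$ on the alphabet $\{\bar 1,1,\dots,\bar n,n\}$ (where $\bar i=-i$) such that $|w_1|\cdots|w_n|$ is a permutation in $S_n$. The alphabet is totally ordered by $\bar 1<\bar 2<\cdots<\bar n<1<2<\cdots<n$. For a word $w$ over a totally ordered alphabet, $\mathrm{Des}(w)=\{i: w_i>w_{i+1}\}$, $\mathrm{des}(w)=|\mathrm{Des}(w)|$, and $\mathrm{maj}(w)=\sum_{i\in\mathrm{Des}(w)} i$. For $w\in B_n$: $\mathrm{fdes}(w)=2\,\mathrm{des}(w)+1$ if $w_1<0$ and $\mathrm{fdes}(w)=2\,\mathrm{des}(w)$ if $w_1>0$; $\mathrm{fmaj}(w)=2\,\mathrm{maj}(w)+|\{i:w_i<0\}|$. *)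

theory Defs
  imports Main
begin

text \<open>Words are lists; positions are 1-based as in the paper: position i (1 \<le> i < length w)
  is a descent w.r.t. the strict order lt if w_i > w_(i+1), i.e. lt (w!i) (w!(i-1)).\<close>

definition Des_wrt :: "('a \<Rightarrow> 'a \<Rightarrow> bool) \<Rightarrow> 'a list \<Rightarrow> nat set" where
  "Des_wrt lt w = {i. 1 \<le> i \<and> i < length w \<and> lt (w ! i) (w ! (i - 1))}"

definition des_wrt :: "('a \<Rightarrow> 'a \<Rightarrow> bool) \<Rightarrow> 'a list \<Rightarrow> nat" where
  "des_wrt lt w = card (Des_wrt lt w)"

definition maj_wrt :: "('a \<Rightarrow> 'a \<Rightarrow> bool) \<Rightarrow> 'a list \<Rightarrow> nat" where
  "maj_wrt lt w = (\<Sum>i\<in>Des_wrt lt w. i)"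

definition Sn :: "nat \<Rightarrow> nat list set" where
  "Sn n = {u. length u = n \<and> distinct u \<and> set u = {1..n}}"

text \<open>Signed permutations: words over nonzero integers (bar i = -i) whose absolute values
  form a permutation of [n].\<close>
definition Bn :: "nat \<Rightarrow> int list set" where
  "Bn n = {w. length w = n \<and> distinct (map abs w) \<and> set (map abs w) = {1..int n}}"

text \<open>The order bar1 < bar2 < ... < barn < 1 < 2 < ... < n on the signed alphabet.\<close>
definition sless :: "int \<Rightarrow> int \<Rightarrow> bool" where
  "sless a b = (if a < 0 \<and> b < 0 then \<bar>a\<bar> < \<bar>b\<bar> else a < b)"

definition fdes :: "int list \<Rightarrow> nat" where
  "fdes w = 2 * des_wrt sless w + (if hd w < 0 then 1 else 0)"

definition fmaj :: "int list \<Rightarrow> nat" where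
  "fmaj w = 2 * maj_wrt sless w + length (filter (\<lambda>x. x < 0) w)"

end

theory Submission
  imports Defs
begin

lemma Des_snoc: "Des_wrt lt (xs@[y]) = Des_wrt lt xs \<union> (if xs \<noteq> [] \<and> lt y (last xs) then {length xs} else {})"
proof (rule set_eqI)
  fix i
  show "i \<in> Des_wrt lt (xs@[y]) \<longleftrightarrow> i \<in> Des_wrt lt xs \<union> (if xs \<noteq> [] \<and> lt y (last xs) then {length xs} else {})"
  proof (cases "i < length xs")
    case True then show ?thesis unfolding Des_wrt_def by (auto simp: nth_append)
  next
    case False
    show ?thesis
    proof (cases "i = length xs")
      case True
      then show ?thesis using False unfolding Des_wrt_def
        by (cases xs rule: rev_cases) (auto simp: nth_append)
    next
      case False2: False
      then show ?thesis using False unfolding Des_wrt_def by auto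
    qed
  qed
qed

lemma Des_fin: "finite (Des_wrt lt xs)" unfolding Des_wrt_def by (rule finite_subset[of _ "{..<length xs}"]) auto

lemma Des_notin: "length xs \<notin> Des_wrt lt xs" unfolding Des_wrt_def by auto

lemma des_snoc: "des_wrt lt (xs@[y]) = des_wrt lt xs + (if xs \<noteq> [] \<and> lt y (last xs) then 1 else 0)"
  unfolding des_wrt_def Des_snoc by (simp add: Des_fin Des_notin)

lemma maj_snoc: "maj_wrt lt (xs@[y]) = maj_wrt lt xs + (if xs \<noteq> [] \<and> lt y (last xs) then length xs else 0)"
  unfolding maj_wrt_def Des_snoc by (simp add: Des_fin Des_notin)

definition sg :: "bool \<Rightarrow> nat \<Rightarrow> int" where "sg b a = (if b then - int a else int a)"
definition sw :: "bool list \<Rightarrow> nat list \<Rightarrow> int list" where "sw e u = map2 sg e u"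

lemma sw_snoc: "length e = length u \<Longrightarrow> sw (e@[b]) (u@[x]) = sw e u @ [sg b x]"
  by (simp add: sw_def)

lemma sw_len: "length e = length u \<Longrightarrow> length (sw e u) = length u"
  by (simp add: sw_def)

lemma last_sw: "length e = length u \<Longrightarrow> u \<noteq> [] \<Longrightarrow> last (sw e u) = sg (last e) (last u)"
proof (induction e u rule: list_induct2)
  case (Cons x xs y ys) then show ?case by (cases ys; cases xs) (auto simp: sw_def)
qed simp

lemma sless_sg: "x > 0 \<Longrightarrow> y > 0 \<Longrightarrow> sless (sg b x) (sg b' y) = (if b = b' then x < y else b \<and> \<not> b')"
  by (auto simp: sless_def sg_def)

lemma hd_snoc: "xs \<noteq> [] \<Longrightarrow> hd (xs @ [z]) = hd xs" by (cases xs) auto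

definition W :: "'a::comm_ring_1 \<Rightarrow> 'a \<Rightarrow> bool list \<Rightarrow> nat list \<Rightarrow> 'a" where
  "W t q e u = t ^ fdes (sw e u) * q ^ fmaj (sw e u)"

lemma W_snoc:
  assumes "length e = length u" "u \<noteq> []" "x > 0" "last u > 0"
  shows "W t q (e@[b]) (u@[x]) = W t q e u *
     (if (if b = last e then x < last u else b \<and> \<not> last e) then t^2*q^(2*length u) else 1) * (if b then q else 1)"
proof -
  have ne: "sw e u \<noteq> []" using assms(1,2) sw_len by fastforce
  have D: "sless (sg b x) (last (sw e u)) = (if b = last e then x < last u else b \<and> \<not> last e)"
    using assms by (simp add: last_sw sless_sg)
  have f: "length (filter (\<lambda>x. x < 0) [sg b x]) = (if b then 1 else 0)" using assms(3) by (simp add: sg_def)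
  have e1: "fdes (sw (e@[b]) (u@[x])) = fdes (sw e u) + (if (if b = last e then x < last u else b \<and> \<not> last e) then 2 else 0)"
    unfolding fdes_def sw_snoc[OF assms(1)] des_snoc hd_snoc[OF ne] using ne D by auto
  have e2: "fmaj (sw (e@[b]) (u@[x])) = fmaj (sw e u) + (if (if b = last e then x < last u else b \<and> \<not> last e) then 2 * length u else 0) + (if b then 1 else 0)"
    unfolding fmaj_def sw_snoc[OF assms(1)] maj_snoc using ne D f sw_len[OF assms(1)] by auto
  show ?thesis unfolding W_def e1 e2
    by (auto simp: power_add power_mult algebra_simps)
qed

lemma Des_single: "Des_wrt lt [x] = {}" unfolding Des_wrt_def by auto

lemma set_snoc_img: "{e. length e = Suc k \<and> last e = b} = (\<lambda>e'. e'@[b]) ` {e'. length e' = k}"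
proof (rule set_eqI, rule iffI)
  fix e assume "e \<in> {e. length e = Suc k \<and> last e = b}"
  then show "e \<in> (\<lambda>e'. e'@[b]) ` {e'. length e' = k}"
    by (cases e rule: rev_cases) auto
qed auto

lemma split_len: "k > 0 \<Longrightarrow> {e::bool list. length e = k} = {e. length e = k \<and> last e = False} \<union> {e. length e = k \<and> last e = True}"
  by auto

lemma fin_len: "finite {e::bool list. length e = k \<and> P e}"
  by (rule finite_subset[OF _ finite_lists_length_eq[of "UNIV::bool set" k]]) auto

lemma key:
  fixes t q :: "'a::comm_ring_1"
  assumes "u \<noteq> []" "\<forall>x\<in>set u. x > 0"
  shows "(\<Sum>e\<in>{e. length e = length u \<and> last e = b}. W t q e u)
     = (if b then t * q ^ length u else 1) * (t ^ des_wrt (<) u * q ^ maj_wrt (<) u) * (\<Prod>i=1..length u - 1. 1 + t * q ^ i)"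
  using assms
proof (induction u arbitrary: b rule: rev_induct)
  case Nil then show ?case by simp
next
  case (snoc x xs)
  show ?case
  proof (cases "xs = []")
    case True
    have st: "{e::bool list. length e = length (xs@[x]) \<and> last e = b} = {[b]}"
      using True by (auto simp: length_Suc_conv)
    show ?thesis using True snoc.prems unfolding st
      by (auto simp: W_def fdes_def fmaj_def sw_def sg_def des_wrt_def maj_wrt_def Des_single)
  next
    case False
    define k where "k = length xs"
    have k0: "k > 0" using False k_def by auto
    have pos: "\<forall>y\<in>set xs. y > 0" "x > 0" using snoc.prems by auto
    have lpos: "last xs > 0" using pos False by auto
    define G where "G c = (if (if b = c then x < last xs else b \<and> \<not> c) then t^2*q^(2*k) else 1) * (if b then q else 1)" for c
    define T where "T = t ^ des_wrt (<) xs * q ^ maj_wrt (<) xs"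
    define P where "P = (\<Prod>i=1..k - 1. 1 + t * q ^ i)"
    have IH: "(\<Sum>e\<in>{e. length e = k \<and> last e = c}. W t q e xs) = (if c then t * q ^ k else 1) * T * P" for c
      using snoc.IH[OF False pos(1), of c] unfolding k_def T_def P_def .
    have "(\<Sum>e\<in>{e. length e = length (xs@[x]) \<and> last e = b}. W t q e (xs@[x]))
        = (\<Sum>e'\<in>{e'. length e' = k}. W t q (e'@[b]) (xs@[x]))"
      unfolding k_def length_append_singleton set_snoc_img
      by (subst sum.reindex) (auto simp: inj_on_def)
    also have "\<dots> = (\<Sum>e'\<in>{e'. length e' = k}. W t q e' xs * G (last e'))"
      by (rule sum.cong) (auto simp: W_snoc False lpos pos k_def G_def mult.assoc)
    also have "\<dots> = (\<Sum>e'\<in>{e'. length e' = k \<and> last e' = False}. W t q e' xs * G (last e'))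
                    + (\<Sum>e'\<in>{e'. length e' = k \<and> last e' = True}. W t q e' xs * G (last e'))"
      by (subst split_len[OF k0], rule sum.union_disjoint) (auto simp: fin_len)
    also have "\<dots> = (\<Sum>e'\<in>{e'. length e' = k \<and> last e' = False}. W t q e' xs) * G False
                    + (\<Sum>e'\<in>{e'. length e' = k \<and> last e' = True}. W t q e' xs) * G True"
      by (simp add: sum_distrib_right)
    also have "\<dots> = T * P * (G False + t * q ^ k * G True)"
      using IH[of False] IH[of True] by (simp add: algebra_simps)
    also have "\<dots> = (if b then t * q ^ length (xs@[x]) else 1) * (t ^ des_wrt (<) (xs@[x]) * q ^ maj_wrt (<) (xs@[x])) * (\<Prod>i=1..length (xs@[x]) - 1. 1 + t * q ^ i)"
    proof -
      have Pk: "(\<Prod>i=1..length (xs@[x]) - 1. 1 + t * q ^ i) = P * (1 + t * q ^ k)"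
        using k0 unfolding P_def k_def by (cases "length xs") (auto simp: prod.cl_ivl_Suc)
      have Tk: "t ^ des_wrt (<) (xs@[x]) * q ^ maj_wrt (<) (xs@[x]) = T * (if x < last xs then t * q ^ k else 1)"
        unfolding T_def des_snoc maj_snoc k_def using False by (auto simp: power_add)
      have qq: "q^(2*k) = q^k*q^k" by (simp add: power_add mult_2)
      show ?thesis unfolding Pk Tk G_def qq
        by (auto simp: k_def power2_eq_square algebra_simps)
    qed
    finally show ?thesis .
  qed
qed

lemma key_all:
  fixes t q :: "'a::comm_ring_1"
  assumes "u \<noteq> []" "\<forall>x\<in>set u. x > 0"
  shows "(\<Sum>e\<in>{e. length e = length u}. W t q e u)
     = (t ^ des_wrt (<) u * q ^ maj_wrt (<) u) * (\<Prod>i=1..length u. 1 + t * q ^ i)"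
proof -
  have k0: "length u > 0" using assms by auto
  have "(\<Sum>e\<in>{e. length e = length u}. W t q e u) =
     (\<Sum>e\<in>{e. length e = length u \<and> last e = False}. W t q e u) + (\<Sum>e\<in>{e. length e = length u \<and> last e = True}. W t q e u)"
    by (subst split_len[OF k0], rule sum.union_disjoint) (auto simp: fin_len)
  also have "\<dots> = (t ^ des_wrt (<) u * q ^ maj_wrt (<) u) * (\<Prod>i=1..length u - 1. 1 + t * q ^ i) * (1 + t * q ^ length u)"
    unfolding key[OF assms] by (simp add: algebra_simps)
  also have "\<dots> = (t ^ des_wrt (<) u * q ^ maj_wrt (<) u) * (\<Prod>i=1..length u. 1 + t * q ^ i)"
    using k0 by (cases "length u") (auto simp: prod.cl_ivl_Suc mult.assoc)
  finally show ?thesis .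
qed

lemma abs_sw: "length e = length u \<Longrightarrow> map abs (sw e u) = map int u"
  by (induction e u rule: list_induct2) (auto simp: sw_def sg_def)

lemma natabs_sw: "length e = length u \<Longrightarrow> map (nat \<circ> abs) (sw e u) = u"
  by (induction e u rule: list_induct2) (auto simp: sw_def sg_def)

lemma neg_sw: "length e = length u \<Longrightarrow> \<forall>x\<in>set u. x > 0 \<Longrightarrow> map (\<lambda>x. x < 0) (sw e u) = e"
  by (induction e u rule: list_induct2) (auto simp: sw_def sg_def)

lemma sw_inv: "\<forall>x\<in>set w. x \<noteq> 0 \<Longrightarrow> sw (map (\<lambda>x. x < 0) w) (map (nat \<circ> abs) w) = w"
  by (induction w) (auto simp: sw_def sg_def)

lemma nat_img: "nat ` {1..int n} = {1..n}"
proof (rule set_eqI, rule iffI)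
  fix x assume "x \<in> {1..n}" then show "x \<in> nat ` {1..int n}"
    by (intro image_eqI[of _ _ "int x"]) auto
qed auto

lemma int_img: "int ` {1..n} = {1..int n}"
proof (rule set_eqI, rule iffI)
  fix x assume "x \<in> {1..int n}" then show "x \<in> int ` {1..n}"
    by (intro image_eqI[of _ _ "nat x"]) auto
qed auto

lemma Sn_pos: "u \<in> Sn n \<Longrightarrow> \<forall>x\<in>set u. x > 0" by (auto simp: Sn_def)

lemma Bn_img: "Bn n = (\<lambda>(u,e). sw e u) ` (Sn n \<times> {e. length e = n})"
proof (rule set_eqI, rule iffI)
  fix w assume w: "w \<in> Bn n"
  have nz: "\<forall>x\<in>set w. x \<noteq> 0"
  proof
    fix x assume "x \<in> set w"
    then have "abs x \<in> set (map abs w)" by auto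
    then show "x \<noteq> 0" using w by (auto simp: Bn_def)
  qed
  have "map (nat \<circ> abs) w \<in> Sn n"
  proof -
    have "set (map (nat \<circ> abs) w) = nat ` set (map abs w)" by auto
    also have "\<dots> = {1..n}" using w nat_img by (simp add: Bn_def)
    finally have s: "set (map (nat \<circ> abs) w) = {1..n}" .
    have "distinct (map nat (map abs w))" using w unfolding Bn_def
      by (auto simp: distinct_map inj_on_def)
    then show ?thesis using s w by (simp add: Sn_def Bn_def)
  qed
  then show "w \<in> (\<lambda>(u,e). sw e u) ` (Sn n \<times> {e. length e = n})"
    using w sw_inv[OF nz] by (intro image_eqI[of _ _ "(map (nat \<circ> abs) w, map (\<lambda>x. x < 0) w)"]) (auto simp: Bn_def)
next
  fix w assume "w \<in> (\<lambda>(u,e). sw e u) ` (Sn n \<times> {e. length e = n})"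
  then obtain u e where ue: "u \<in> Sn n" "length e = n" "w = sw e u" by auto
  have l: "length e = length u" using ue by (simp add: Sn_def)
  have m: "map abs w = map int u" using ue abs_sw[OF l] by simp
  show "w \<in> Bn n" unfolding Bn_def mem_Collect_eq m using ue(1,3) sw_len[OF l] int_img[of n]
    by (simp add: Sn_def distinct_map)
qed

lemma Bn_inj: "inj_on (\<lambda>(u,e). sw e u) (Sn n \<times> {e. length e = n})"
proof (rule inj_onI)
  fix x y assume ax: "x \<in> Sn n \<times> {e. length e = n}" and ay: "y \<in> Sn n \<times> {e. length e = n}"
    and eq: "(\<lambda>(u,e). sw e u) x = (\<lambda>(u,e). sw e u) y"
  obtain u e where x: "x = (u,e)" by (cases x)
  obtain u' e' where y: "y = (u',e')" by (cases y)
  have a: "u \<in> Sn n" "length e = n" "u' \<in> Sn n" "length e' = n" "sw e u = sw e' u'"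
    using ax ay eq x y by auto
  have l: "length e = length u" "length e' = length u'" using a by (auto simp: Sn_def)
  show "x = y" unfolding x y
    using natabs_sw[OF l(1)] natabs_sw[OF l(2)] neg_sw[OF l(1) Sn_pos[OF a(1)]] neg_sw[OF l(2) Sn_pos[OF a(3)]] a(5)
    by metis
qed

theorem theorem5:
  fixes t q :: "'a :: comm_ring_1" and n :: nat
  assumes "n \<ge> 1"
  shows "(\<Sum>w\<in>Bn n. t ^ fdes w * q ^ fmaj w)
       = (\<Sum>u\<in>Sn n. t ^ des_wrt (<) u * q ^ maj_wrt (<) u) * (\<Prod>i=1..n. 1 + t * q ^ i)"
proof -
  have "(\<Sum>w\<in>Bn n. t ^ fdes w * q ^ fmaj w) = (\<Sum>(u,e)\<in>Sn n \<times> {e. length e = n}. W t q e u)"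
    unfolding Bn_img by (subst sum.reindex[OF Bn_inj]) (simp add: W_def case_prod_beta)
  also have "\<dots> = (\<Sum>u\<in>Sn n. \<Sum>e\<in>{e. length e = n}. W t q e u)"
    by (rule sum.cartesian_product[symmetric])
  also have "\<dots> = (\<Sum>u\<in>Sn n. (t ^ des_wrt (<) u * q ^ maj_wrt (<) u) * (\<Prod>i=1..n. 1 + t * q ^ i))"
  proof (rule sum.cong[OF refl])
    fix u assume u: "u \<in> Sn n"
    have l: "length u = n" using u by (simp add: Sn_def)
    have "u \<noteq> []" using l assms by auto
    from key_all[OF this Sn_pos[OF u], of t q] show "(\<Sum>e\<in>{e. length e = n}. W t q e u) = (t ^ des_wrt (<) u * q ^ maj_wrt (<) u) * (\<Prod>i=1..n. 1 + t * q ^ i)"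
      unfolding l .
  qed
  also have "\<dots> = (\<Sum>u\<in>Sn n. t ^ des_wrt (<) u * q ^ maj_wrt (<) u) * (\<Prod>i=1..n. 1 + t * q ^ i)"
    by (simp add: sum_distrib_right)
  finally show ?thesis .
qed

end
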